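(* Let $(\lambda_k)_{k\ge1}$, $(\mu_k)_{k\ge1}$ be nonzero real numbers with $|\lambda_1|>|\mu_1|>|\lambda_2|>|\mu_2|>\dots>0$ and $\lambda_k\to0$, let $\sigma=\{\lambda_k^2:k\ge1\}\cup\{0\}$, and let $\Phi(z)=\prod_{k\ge1}\frac{z-\mu_k^2}{z-\lambda_k^2}$ for $z\in\mathbb{C}\setminus\sigma$. Then for all $z\in\mathbb{C}\setminus\sigma$ $$\Phi(z)=1-\sum_{n\ge1}\frac{a_n}{\lambda_n^2-z},\qquad\text{where}\quad a_n=(\lambda_n^2-\mu_n^2)\prod_{k\ne n}\frac{\lambda_n^2-\mu_k^2}{\lambda_n^2-\lambda_k^2},$$ with the series converging uniformly on compact subsets of $\mathbb{C}\setminus\sigma$. *)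

theory Defs
  imports "HOL-Analysis.Analysis"
begin

text \<open>Sequences are indexed from 0 (paper index k corresponds to k-1 here).\<close>

definition spec_set :: "(nat \<Rightarrow> real) \<Rightarrow> complex set" where
  "spec_set lam = {complex_of_real ((lam k)^2) | k. True} \<union> {0}"

definition Phi_factor :: "(nat \<Rightarrow> real) \<Rightarrow> (nat \<Rightarrow> real) \<Rightarrow> complex \<Rightarrow> nat \<Rightarrow> complex" where
  "Phi_factor lam mu z k = (z - complex_of_real ((mu k)^2)) / (z - complex_of_real ((lam k)^2))"

definition Phi :: "(nat \<Rightarrow> real) \<Rightarrow> (nat \<Rightarrow> real) \<Rightarrow> complex \<Rightarrow> complex" where
  "Phi lam mu z = (\<Prod>k. Phi_factor lam mu z k)"

definition coef_factor :: "(nat \<Rightarrow> real) \<Rightarrow> (nat \<Rightarrow> real) \<Rightarrow> nat \<Rightarrow> nat \<Rightarrow> real" where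
  "coef_factor lam mu n k =
     (if k = n then 1 else ((lam n)^2 - (mu k)^2) / ((lam n)^2 - (lam k)^2))"

definition coef :: "(nat \<Rightarrow> real) \<Rightarrow> (nat \<Rightarrow> real) \<Rightarrow> nat \<Rightarrow> real" where
  "coef lam mu n = ((lam n)^2 - (mu n)^2) * (\<Prod>k. coef_factor lam mu n k)"

end

theory Submission
  imports Defs
begin
lemma pf_finite:
  fixes X Y :: "nat \<Rightarrow> 'a::field"
  assumes "\<forall>i<N. \<forall>j<N. i \<noteq> j \<longrightarrow> X i \<noteq> X j" "\<forall>k<N. z \<noteq> X k"
  shows "(\<Prod>k<N. (z - Y k)/(z - X k)) = 1 + (\<Sum>n<N. (X n - Y n) * (\<Prod>k\<in>{..<N}-{n}. (X n - Y k)/(X n - X k)) / (z - X n))"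
  using assms
proof (induction N arbitrary: z)
  case 0
  then show ?case by simp
next
  case (Suc N)
  define R where "R n = (X n - Y n) * (\<Prod>k\<in>{..<N}-{n}. (X n - Y k)/(X n - X k))" for n
  define c where "c = X N - Y N"
  define d where "d = z - X N"
  have d0: "d \<noteq> 0" using Suc.prems by (auto simp: d_def)
  have IHz: "(\<Prod>k<N. (z - Y k)/(z - X k)) = 1 + (\<Sum>n<N. R n / (z - X n))"
    using Suc.IH[of z] Suc.prems unfolding R_def by auto
  have IHx: "(\<Prod>k<N. (X N - Y k)/(X N - X k)) = 1 + (\<Sum>n<N. R n / (X N - X n))"
    using Suc.IH[of "X N"] Suc.prems unfolding R_def by auto
  have e1: "{..<Suc N} - {N} = {..<N}" by auto
  have e2: "n < N \<Longrightarrow> {..<Suc N} - {n} = insert N ({..<N} - {n})" for n by auto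
  have RHS: "(\<Sum>n<Suc N. (X n - Y n) * (\<Prod>k\<in>{..<Suc N}-{n}. (X n - Y k)/(X n - X k)) / (z - X n))
     = (\<Sum>n<N. R n * ((X n - Y N)/(X n - X N)) / (z - X n)) + c * (1 + (\<Sum>n<N. R n / (X N - X n))) / d"
    unfolding sum.lessThan_Suc e1 IHx[symmetric] c_def d_def
    by (intro arg_cong2[where f="(+)"] sum.cong refl) (auto simp: e2 R_def mult_ac)
  have tm: "R n / (z - X n) * (1 + c/d) = R n * ((X n - Y N)/(X n - X N)) / (z - X n) + R n * c / ((X N - X n) * d)"
    if "n < N" for n
  proof -
    have "z - X n \<noteq> 0" "X n - X N \<noteq> 0" "X N - X n \<noteq> 0" using Suc.prems that by auto
    thus ?thesis using d0 unfolding c_def d_def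
      apply (simp add: divide_simps)
      apply (simp add: algebra_simps)
      done
  qed
  have "(\<Prod>k<Suc N. (z - Y k)/(z - X k)) = (1 + (\<Sum>n<N. R n / (z - X n))) * (1 + c/d)"
    using d0 by (simp add: IHz c_def d_def field_simps)
  also have "\<dots> = 1 + c/d + (\<Sum>n<N. R n / (z - X n) * (1 + c/d))"
    by (subst sum_distrib_right[symmetric]) (simp add: algebra_simps)
  also have "\<dots> = 1 + c/d + (\<Sum>n<N. R n * ((X n - Y N)/(X n - X N)) / (z - X n)) + (\<Sum>n<N. R n * c / ((X N - X n) * d))"
  proof -
    have "(\<Sum>n<N. R n / (z - X n) * (1 + c/d)) = (\<Sum>n<N. R n * ((X n - Y N)/(X n - X N)) / (z - X n) + R n * c / ((X N - X n) * d))"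
      by (rule sum.cong[OF refl], rule tm, simp)
    thus ?thesis by (simp add: sum.distrib)
  qed
  also have "\<dots> = 1 + ((\<Sum>n<N. R n * ((X n - Y N)/(X n - X N)) / (z - X n)) + c * (1 + (\<Sum>n<N. R n / (X N - X n))) / d)"
    using d0 by (simp add: algebra_simps add_divide_distrib sum_distrib_left sum_divide_distrib)
  finally show ?case using RHS by simp
qed

lemma pf_real_field:
  fixes x y :: "nat \<Rightarrow> real" and z :: "'a::real_field"
  assumes "\<forall>i<N. \<forall>j<N. i \<noteq> j \<longrightarrow> x i \<noteq> x j" "\<forall>k<N. z \<noteq> of_real (x k)"
  shows "(\<Prod>k<N. (z - of_real (y k))/(z - of_real (x k))) = 1 - (\<Sum>n<N. of_real ((x n - y n) * (\<Prod>k<N. if k = n then 1 else (x n - y k)/(x n - x k))) / (of_real (x n) - z))"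
proof -
  have "(\<Prod>k<N. (z - of_real (y k))/(z - of_real (x k))) = 1 + (\<Sum>n<N. (of_real (x n) - of_real (y n)) * (\<Prod>k\<in>{..<N}-{n}. (of_real (x n) - of_real (y k))/(of_real (x n) - of_real (x k))) / (z - of_real (x n)))"
    by (rule pf_finite) (use assms in auto)
  also have "\<dots> = 1 - (\<Sum>n<N. of_real ((x n - y n) * (\<Prod>k<N. if k = n then 1 else (x n - y k)/(x n - x k))) / (of_real (x n) - z))"
  proof -
    have "(\<Sum>n<N. (of_real (x n) - of_real (y n)) * (\<Prod>k\<in>{..<N}-{n}. (of_real (x n) - of_real (y k))/(of_real (x n) - of_real (x k))) / (z - of_real (x n)))
       = - (\<Sum>n<N. of_real ((x n - y n) * (\<Prod>k<N. if k = n then 1 else (x n - y k)/(x n - x k))) / (of_real (x n) - z))"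
      unfolding sum_negf[symmetric]
    proof (rule sum.cong[OF refl])
      fix n assume "n \<in> {..<N}"
      have p: "(\<Prod>k<N. if k = n then 1 else (x n - y k)/(x n - x k)) = (\<Prod>k\<in>{..<N}-{n}. (x n - y k)/(x n - x k))"
        by (simp add: prod.If_cases Diff_eq)
      show "(of_real (x n) - of_real (y n)) * (\<Prod>k\<in>{..<N}-{n}. (of_real (x n) - of_real (y k))/(of_real (x n) - of_real (x k))) / (z - of_real (x n)) =
         - (of_real ((x n - y n) * (\<Prod>k<N. if k = n then 1 else (x n - y k)/(x n - x k))) / (of_real (x n) - z) :: 'a)"
        unfolding p by (simp add: of_real_prod minus_divide_right)
    qed
    thus ?thesis by simp
  qed
  finally show ?thesis .
qed


lemma ev_far:
  fixes x :: "nat \<Rightarrow> real"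
  assumes "x \<longlonglongrightarrow> 0" "e > 0"
  shows "eventually (\<lambda>k. \<forall>z::complex. e \<le> norm z \<longrightarrow> e / 2 \<le> norm (z - of_real (x k))) sequentially"
proof -
  have "eventually (\<lambda>k. dist (x k) 0 < e/2) sequentially"
    using tendstoD[OF assms(1), of "e/2"] assms(2) by simp
  thus ?thesis
  proof eventually_elim
    case (elim k)
    show ?case
    proof (intro allI impI)
      fix z :: complex assume "e \<le> norm z"
      have "norm z - norm (of_real (x k) :: complex) \<le> norm (z - of_real (x k))"
        by (rule norm_triangle_ineq2)
      thus "e / 2 \<le> norm (z - of_real (x k))" using elim \<open>e \<le> norm z\<close> by simp
    qed
  qed
qed

theorem lemma4p7:
  fixes lam mu :: "nat \<Rightarrow> real"
  assumes inter1: "\<And>k. \<bar>lam k\<bar> > \<bar>mu k\<bar>"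
      and inter2: "\<And>k. \<bar>mu k\<bar> > \<bar>lam (Suc k)\<bar>"
      and pos: "\<And>k. \<bar>mu k\<bar> > 0"
      and lam_nz: "\<And>k. lam k \<noteq> 0"
      and mu_nz: "\<And>k. mu k \<noteq> 0"
      and lim: "lam \<longlonglongrightarrow> 0"
  shows "(\<forall>n. convergent_prod (coef_factor lam mu n))
    \<and> (\<forall>z. z \<notin> spec_set lam \<longrightarrow>
          convergent_prod (Phi_factor lam mu z)
          \<and> (\<lambda>n. complex_of_real (coef lam mu n) / (complex_of_real ((lam n)^2) - z))
               sums (1 - Phi lam mu z))
    \<and> (\<forall>K. compact K \<and> K \<inter> spec_set lam = {} \<longrightarrow>
          uniform_limit K
            (\<lambda>N z. \<Sum>n<N. complex_of_real (coef lam mu n) / (complex_of_real ((lam n)^2) - z))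
            (\<lambda>z. \<Sum>n. complex_of_real (coef lam mu n) / (complex_of_real ((lam n)^2) - z))
            sequentially)"
proof -
  define x where "x k = (lam k)^2" for k
  define y where "y k = (mu k)^2" for k
  have yx: "y k < x k" for k
  proof -
    have "\<bar>mu k\<bar>^2 < \<bar>lam k\<bar>^2" using inter1[of k] by (intro power_strict_mono) auto
    thus ?thesis by (simp add: x_def y_def)
  qed
  have xy: "x (Suc k) < y k" for k
  proof -
    have "\<bar>lam (Suc k)\<bar>^2 < \<bar>mu k\<bar>^2" using inter2[of k] by (intro power_strict_mono) auto
    thus ?thesis by (simp add: x_def y_def)
  qed
  have ypos: "0 < y k" for k using mu_nz[of k] by (simp add: y_def)
  have xpos: "0 < x k" for k using ypos[of k] yx[of k] by simp
  have xdec: "x k < x n" if "n < k" for n k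
  proof -
    have "(\<lambda>k. - x k) n < (\<lambda>k. - x k) k"
      by (rule lift_Suc_mono_less[of "\<lambda>k. - x k"]) (use xy yx that in \<open>auto intro: less_trans\<close>)
    thus ?thesis by simp
  qed
  have xinj: "x i \<noteq> x j" if "i \<noteq> j" for i j
    using xdec[of i j] xdec[of j i] that by (cases "i < j") auto
  have xle0: "x k \<le> x 0" for k using xdec[of 0 k] by (cases k) auto
  have xlim: "x \<longlonglongrightarrow> 0"
    using tendsto_power[OF lim, of 2] by (simp add: x_def[abs_def])
  have sxy: "summable (\<lambda>k. x k - y k)"
  proof (rule summable_comparison_test[OF _ telescope_summable'[OF xlim]])
    show "\<exists>N. \<forall>n\<ge>N. norm (x n - y n) \<le> x n - x (Suc n)"
      using yx xy by (intro exI[of _ 0]) (auto simp: less_imp_le)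
  qed
  define cf where "cf n k = (if k = n then 1 else (x n - y k)/(x n - x k))" for n k
  have cf_eq: "coef_factor lam mu n = cf n" for n
    by (auto simp: fun_eq_iff coef_factor_def cf_def x_def y_def)
  have coef_eq: "coef lam mu n = (x n - y n) * prodinf (cf n)" for n
    by (simp add: coef_def cf_eq x_def y_def)
  have Phi_eq: "Phi_factor lam mu z = (\<lambda>k. (z - of_real (y k)) / (z - of_real (x k)))" for z
    by (auto simp: fun_eq_iff Phi_factor_def x_def y_def)
  have cfpos: "0 < cf n k" for n k
  proof (cases k n rule: linorder_cases)
    case less
    hence "x n \<le> x (Suc k)" using xdec[of "Suc k" n] by (cases "Suc k = n") auto
    then show ?thesis using less xdec[of k n] xy[of k] by (auto simp: cf_def intro!: divide_neg_neg)
  next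
    case greater
    then show ?thesis using xdec[of n k] yx[of k] by (auto simp: cf_def)
  qed (simp add: cf_def)
  have cfge1: "1 \<le> cf n k" if "n < k" for n k
    using that xdec[of n k] yx[of k] by (auto simp: cf_def)
  have cp1: "convergent_prod (cf n)" for n
  proof (rule abs_convergent_prod_imp_convergent_prod, rule summable_imp_abs_convergent_prod)
    have d: "0 < x n - x (Suc n)" using xdec[of n "Suc n"] by simp
    show "summable (\<lambda>k. norm (cf n k - 1))"
    proof (rule summable_comparison_test_ev[OF _ summable_mult[OF sxy, of "1 / (x n - x (Suc n))"]])
      have "norm (norm (cf n k - 1)) \<le> 1 / (x n - x (Suc n)) * (x k - y k)" if "n < k" for k
      proof -
        have k1: "x k \<le> x (Suc n)" using xdec[of "Suc n" k] that by (cases "Suc n = k") auto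
        have "cf n k - 1 = (x k - y k) / (x n - x k)"
          using that xinj[of n k] by (simp add: cf_def field_simps)
        moreover have "(x k - y k) / (x n - x k) \<le> (x k - y k) / (x n - x (Suc n))"
          using yx[of k] k1 d by (intro divide_left_mono) auto
        moreover have "0 \<le> (x k - y k) / (x n - x k)" using yx[of k] xdec[of n k] that by simp
        moreover have "(x k - y k) / (x n - x (Suc n)) = 1 / (x n - x (Suc n)) * (x k - y k)" by simp
        ultimately show ?thesis by (simp only: real_norm_def abs_abs)
      qed
      thus "eventually (\<lambda>k. norm (norm (cf n k - 1)) \<le> 1 / (x n - x (Suc n)) * (x k - y k)) sequentially"
        by (auto simp: eventually_at_top_linorder intro!: exI[of _ "Suc n"])
    qed
  qed
  have lx: "(lam k)^2 = x k" for k by (simp add: x_def)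
  define A where "A N n = (x n - y n) * (\<Prod>k<N. cf n k)" for N n
  have identC: "(\<Prod>k<N. Phi_factor lam mu z k) = 1 - (\<Sum>n<N. of_real (A N n) / (of_real (x n) - z))"
    if "z \<notin> spec_set lam" for z N
  proof -
    have "\<forall>k<N. z \<noteq> of_real (x k)" using that by (auto simp: spec_set_def x_def)
    thus ?thesis unfolding Phi_eq A_def cf_def
      by (intro pf_real_field) (use xinj in auto)
  qed
  have identR: "(\<Prod>k<N. (-1 - y k)/(-1 - x k)) = 1 - (\<Sum>n<N. A N n / (x n + 1))" for N
  proof -
    have "(\<Prod>k<N. ((-1::real) - of_real (y k))/(-1 - of_real (x k))) = 1 - (\<Sum>n<N. of_real (A N n) / (of_real (x n) - (-1::real)))"
      unfolding A_def cf_def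
    proof (intro pf_real_field)
      have "x k \<noteq> -1" for k using xpos[of k] by simp
      thus "\<forall>k<N. (-1::real) \<noteq> of_real (x k)" by (metis of_real_eq_id id_apply)
    qed (use xinj in auto)
    thus ?thesis by (simp add: diff_minus_eq_add)
  qed
  have Alim: "(\<lambda>N. A N n) \<longlonglongrightarrow> coef lam mu n" for n
  proof -
    have "(\<lambda>N. prod (cf n) {..N}) \<longlonglongrightarrow> prodinf (cf n)"
      by (rule convergent_prod_LIMSEQ[OF cp1])
    hence "(\<lambda>N. prod (cf n) {..<N}) \<longlonglongrightarrow> prodinf (cf n)"
      using LIMSEQ_lessThan_iff_atMost[where f="\<lambda>S. prod (cf n) S"] by simp
    from tendsto_mult_left[OF this, of "x n - y n"] show ?thesis
      unfolding A_def coef_eq by simp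
  qed
  have Anonneg: "0 \<le> A N n" for N n
    unfolding A_def using yx[of n] cfpos by (intro mult_nonneg_nonneg prod_nonneg) (auto simp: less_imp_le)
  have Ale: "A N n \<le> coef lam mu n" if "n < N" for N n
  proof -
    define B where "B m = A (m + Suc n) n" for m
    have "incseq B"
    proof (rule incseq_SucI)
      fix m
      have "B (Suc m) = B m * cf n (m + Suc n)" by (simp add: B_def A_def)
      moreover have "B m * 1 \<le> B m * cf n (m + Suc n)"
        using Anonneg cfge1[of n "m + Suc n"] unfolding B_def by (intro mult_left_mono) auto
      ultimately show "B m \<le> B (Suc m)" by simp
    qed
    moreover have "B \<longlonglongrightarrow> coef lam mu n"
      unfolding B_def using LIMSEQ_ignore_initial_segment[OF Alim[of n], of "Suc n"] by simp
    ultimately have "B (N - Suc n) \<le> coef lam mu n" by (rule incseq_le)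
    thus ?thesis using that by (simp add: B_def)
  qed
  have coefnn: "0 \<le> coef lam mu n" for n
    by (rule LIMSEQ_le_const[OF Alim]) (use Anonneg in auto)
  have Sbound: "(\<Sum>n<N. A N n / (x n + 1)) \<le> 1" for N
  proof -
    have "0 \<le> (\<Prod>k<N. (-1 - y k)/(-1 - x k))"
    proof (intro prod_nonneg ballI divide_nonpos_nonpos)
      fix k show "-1 - y k \<le> 0" "-1 - x k \<le> 0" using xpos[of k] ypos[of k] by auto
    qed
    thus ?thesis using identR[of N] by simp
  qed
  have Pbound: "(\<Sum>n<M. coef lam mu n / (x n + 1)) \<le> 1" for M
  proof (rule LIMSEQ_le_const2)
    show "(\<lambda>N. \<Sum>n<M. A N n / (x n + 1)) \<longlonglongrightarrow> (\<Sum>n<M. coef lam mu n / (x n + 1))"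
      by (intro tendsto_sum tendsto_divide Alim tendsto_const) (use xpos in \<open>auto simp: add_pos_pos less_imp_neq[symmetric]\<close>)
    show "\<exists>N. \<forall>N'\<ge>N. (\<Sum>n<M. A N' n / (x n + 1)) \<le> 1"
    proof (intro exI allI impI)
      fix N assume "M \<le> N"
      have "(\<Sum>n<M. A N n / (x n + 1)) \<le> (\<Sum>n<N. A N n / (x n + 1))"
        using \<open>M \<le> N\<close> Anonneg xpos by (intro sum_mono2) (auto simp: less_imp_le)
      also have "\<dots> \<le> 1" by (rule Sbound)
      finally show "(\<Sum>n<M. A N n / (x n + 1)) \<le> 1" .
    qed
  qed
  have coefsum: "summable (\<lambda>n. coef lam mu n)"
  proof (rule summableI_nonneg_bounded[OF coefnn])
    fix M
    have "(\<Sum>n<M. coef lam mu n) \<le> (\<Sum>n<M. (x 0 + 1) * (coef lam mu n / (x n + 1)))"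
    proof (rule sum_mono)
      fix n
      have "coef lam mu n = (x n + 1) * (coef lam mu n / (x n + 1))"
        using xpos[of n] by simp
      also have "\<dots> \<le> (x 0 + 1) * (coef lam mu n / (x n + 1))"
        using xle0[of n] xpos[of n] coefnn[of n] by (intro mult_right_mono) auto
      finally show "coef lam mu n \<le> (x 0 + 1) * (coef lam mu n / (x n + 1))" .
    qed
    also have "\<dots> = (x 0 + 1) * (\<Sum>n<M. coef lam mu n / (x n + 1))"
      by (simp add: sum_distrib_left)
    also have "\<dots> \<le> (x 0 + 1) * 1"
      using Pbound[of M] xpos[of 0] by (intro mult_left_mono) auto
    finally show "(\<Sum>n<M. coef lam mu n) \<le> x 0 + 1" by simp
  qed
  have P2: "convergent_prod (Phi_factor lam mu z)
          \<and> (\<lambda>n. complex_of_real (coef lam mu n) / (complex_of_real (x n) - z)) sums (1 - Phi lam mu z)"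
    if zs: "z \<notin> spec_set lam" for z
  proof -
    have z0: "z \<noteq> 0" using zs by (auto simp: spec_set_def)
    have zx: "z \<noteq> of_real (x k)" for k using zs by (auto simp: spec_set_def x_def)
    have zx': "of_real (x k) - z \<noteq> 0" for k using zx[of k] by simp
    have far: "eventually (\<lambda>k. norm z / 2 \<le> norm (z - of_real (x k))) sequentially"
      using ev_far[OF xlim, of "norm z"] z0 by (auto elim: eventually_mono)
    have cpz: "convergent_prod (Phi_factor lam mu z)"
    proof (rule abs_convergent_prod_imp_convergent_prod, rule summable_imp_abs_convergent_prod)
      show "summable (\<lambda>k. norm (Phi_factor lam mu z k - 1))"
      proof (rule summable_comparison_test_ev[OF _ summable_mult[OF sxy, of "2 / norm z"]])
        show "eventually (\<lambda>k. norm (norm (Phi_factor lam mu z k - 1)) \<le> 2 / norm z * (x k - y k)) sequentially"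
          using far
        proof eventually_elim
          case (elim k)
          have nz: "z - of_real (x k) \<noteq> 0" using zx[of k] by simp
          have "Phi_factor lam mu z k - 1 = of_real (x k - y k) / (z - of_real (x k))"
            unfolding Phi_eq using nz by (simp add: field_simps)
          moreover have "cmod (of_real (x k) - of_real (y k)) = x k - y k"
            using yx[of k] by (simp only: of_real_diff[symmetric] norm_of_real)
          ultimately have "norm (norm (Phi_factor lam mu z k - 1)) = (x k - y k) / norm (z - of_real (x k))"
            using yx[of k] by (simp add: norm_divide)
          also have "\<dots> \<le> (x k - y k) / (norm z / 2)"
            using yx[of k] elim z0 nz by (intro divide_left_mono) (auto intro!: mult_pos_pos)
          also have "\<dots> = 2 / norm z * (x k - y k)" by simp
          finally show ?case .
        qed
      qed
    qed
    have Plim: "(\<lambda>N. \<Prod>k<N. Phi_factor lam mu z k) \<longlonglongrightarrow> Phi lam mu z"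
    proof -
      have "(\<lambda>N. prod (Phi_factor lam mu z) {..N}) \<longlonglongrightarrow> Phi lam mu z"
        unfolding Phi_def by (rule convergent_prod_LIMSEQ[OF cpz])
      thus ?thesis
        using LIMSEQ_lessThan_iff_atMost[where f="\<lambda>S. prod (Phi_factor lam mu z) S"] by simp
    qed
    define a where "a n N = (if n < N then of_real (A N n) / (of_real (x n) - z) else 0)" for n N
    define b where "b n = complex_of_real (coef lam mu n) / (complex_of_real (x n) - z)" for n
    define M where "M n = coef lam mu n / norm (of_real (x n) - z :: complex)" for n
    have T: "eventually (\<lambda>N. summable (\<lambda>k. norm (a k N))) sequentially \<and>
           summable (\<lambda>n. norm (b n)) \<and>
           ((\<lambda>N. suminf (\<lambda>k. a k N)) \<longlonglongrightarrow> suminf b)"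
    proof (rule tannerys_theorem)
      fix n
      have "(\<lambda>N. of_real (A N n) / (of_real (x n) - z)) \<longlonglongrightarrow> b n"
        unfolding b_def by (intro tendsto_divide tendsto_of_real Alim tendsto_const zx')
      moreover have "eventually (\<lambda>N. of_real (A N n) / (of_real (x n) - z) = a n N) sequentially"
        using eventually_gt_at_top[of n] by eventually_elim (simp add: a_def)
      ultimately show "(\<lambda>N. a n N) \<longlonglongrightarrow> b n" by (rule Lim_transform_eventually)
    next
      show "eventually (\<lambda>(k, N). norm (a k N) \<le> M k) (at_top \<times>\<^sub>F sequentially)"
      proof (rule always_eventually, clarify)
        fix k N
        show "norm (a k N) \<le> M k"
        proof (cases "k < N")
          case True
          have "norm (a k N) = A N k / norm (of_real (x k) - z :: complex)"
            using True Anonneg[of N k] by (simp add: a_def norm_divide)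
          also have "\<dots> \<le> M k" unfolding M_def
            using Ale[OF True] by (intro divide_right_mono) auto
          finally show ?thesis .
        next
          case False
          thus ?thesis using coefnn[of k] by (simp add: a_def M_def)
        qed
      qed
    next
      show "summable M"
      proof (rule summable_comparison_test_ev[OF _ summable_mult[OF coefsum, of "2 / norm z"]])
        show "eventually (\<lambda>n. norm (M n) \<le> 2 / norm z * coef lam mu n) sequentially"
          using far
        proof eventually_elim
          case (elim k)
          have "norm (M k) = coef lam mu k / norm (z - of_real (x k))"
            using coefnn[of k] by (simp add: M_def norm_minus_commute)
          also have "\<dots> \<le> coef lam mu k / (norm z / 2)"
            using coefnn[of k] elim z0 zx[of k] by (intro divide_left_mono) (auto intro!: mult_pos_pos)
          also have "\<dots> = 2 / norm z * coef lam mu k" by simp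
          finally show ?case .
        qed
      qed
    qed simp
    have "(\<lambda>N. suminf (\<lambda>k. a k N)) = (\<lambda>N. 1 - (\<Prod>k<N. Phi_factor lam mu z k))"
    proof
      fix N
      have "suminf (\<lambda>k. a k N) = (\<Sum>k<N. a k N)"
        by (rule suminf_finite) (auto simp: a_def)
      also have "\<dots> = (\<Sum>k<N. of_real (A N k) / (of_real (x k) - z))"
        by (rule sum.cong) (auto simp: a_def)
      also have "\<dots> = 1 - (\<Prod>k<N. Phi_factor lam mu z k)"
        using identC[OF zs, of N] by simp
      finally show "suminf (\<lambda>k. a k N) = 1 - (\<Prod>k<N. Phi_factor lam mu z k)" .
    qed
    with T have "(\<lambda>N. 1 - (\<Prod>k<N. Phi_factor lam mu z k)) \<longlonglongrightarrow> suminf b" by simp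
    moreover have "(\<lambda>N. 1 - (\<Prod>k<N. Phi_factor lam mu z k)) \<longlonglongrightarrow> 1 - Phi lam mu z"
      by (intro tendsto_diff tendsto_const Plim)
    ultimately have "suminf b = 1 - Phi lam mu z" by (rule LIMSEQ_unique)
    moreover have "summable b" using T summable_norm_cancel by blast
    ultimately have "b sums (1 - Phi lam mu z)" using summable_sums by fastforce
    thus ?thesis using cpz unfolding b_def by simp
  qed
  have P3: "uniform_limit K
            (\<lambda>N z. \<Sum>n<N. complex_of_real (coef lam mu n) / (complex_of_real (x n) - z))
            (\<lambda>z. \<Sum>n. complex_of_real (coef lam mu n) / (complex_of_real (x n) - z))
            sequentially"
    if K: "compact K" "K \<inter> spec_set lam = {}" for K
  proof -
    have "0 \<notin> K" using K(2) by (auto simp: spec_set_def)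
    then obtain d where d: "d > 0" "\<And>z. z \<in> K \<Longrightarrow> d \<le> dist 0 z"
      using separate_point_closed[OF compact_imp_closed[OF K(1)]] by blast
    show ?thesis
    proof (rule Weierstrass_m_test_ev[OF _ summable_mult2[OF coefsum, of "2 / d"]])
      show "eventually (\<lambda>n. \<forall>z\<in>K. norm (complex_of_real (coef lam mu n) / (complex_of_real (x n) - z)) \<le> coef lam mu n * (2 / d)) sequentially"
        using ev_far[OF xlim d(1)]
      proof eventually_elim
        case (elim n)
        show ?case
        proof
          fix z assume "z \<in> K"
          hence "d \<le> norm z" using d(2)[of z] by simp
          hence dz: "d / 2 \<le> norm (z - of_real (x n))" using elim by blast
          have "norm (complex_of_real (coef lam mu n) / (complex_of_real (x n) - z)) = coef lam mu n / norm (z - of_real (x n))"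
            using coefnn[of n] by (simp add: norm_divide norm_minus_commute)
          also have "\<dots> \<le> coef lam mu n / (d / 2)"
          proof -
            have "0 < norm (z - of_real (x n))" using dz d(1) by linarith
            thus ?thesis using coefnn[of n] dz d(1) by (intro divide_left_mono) (auto intro!: mult_pos_pos)
          qed
          finally show "norm (complex_of_real (coef lam mu n) / (complex_of_real (x n) - z)) \<le> coef lam mu n * (2 / d)" by simp
        qed
      qed
    qed
  qed
  show ?thesis unfolding lx cf_eq using cp1 P2 P3 by blast
qed

end
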